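(* Let $G$ be a finite abstract simplicial complex such that all unit spheres $S(x)$, $x\in G$, have the same Euler characteristic $w(S(x))=c$. Then either $w(G)=0$ or $w(S(x))=0$ for all $x \in G$.
   Context: A finite abstract simplicial complex $G$ is a finite set of non-empty finite sets closed under taking non-empty subsets. For $x\in G$, $w(x)=(-1)^{|x|-1}$, and for $A\subset G$, $w(A)=\sum_{y\in A}w(y)$ (Euler characteristic). For $x\in G$: $U(x)=\{y\in G: x\subset y\}$, $B(x)=\{y\in G : y\subset z \text{ for some } z\in U(x)\}$ (the closure of $U(x)$ in the topology with basis the sets $U(x)$), and the unit sphere $S(x)=B(x)\setminus U(x)$. *)

theory Defs
  imports Main
begin

definition simplicial_complex :: "'a set set \<Rightarrow> bool" where
  "simplicial_complex G \<longleftrightarrow> finite G \<and>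
     (\<forall>x\<in>G. x \<noteq> {} \<and> finite x \<and> (\<forall>y. y \<noteq> {} \<and> y \<subseteq> x \<longrightarrow> y \<in> G))"

definition w :: "'a set \<Rightarrow> int" where
  "w x = (-1) ^ (card x - 1)"

definition euler_char :: "'a set set \<Rightarrow> int" where
  "euler_char A = (\<Sum>y\<in>A. w y)"

definition star :: "'a set set \<Rightarrow> 'a set \<Rightarrow> 'a set set" where
  "star G x = {y \<in> G. x \<subseteq> y}"

definition closed_star :: "'a set set \<Rightarrow> 'a set \<Rightarrow> 'a set set" where
  "closed_star G x = {y \<in> G. \<exists>z\<in>star G x. y \<subseteq> z}"

definition unit_sphere :: "'a set set \<Rightarrow> 'a set \<Rightarrow> 'a set set" where
  "unit_sphere G x = closed_star G x - star G x"

end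

theory Submission
  imports Defs
begin

lemma toggle_sum:
  assumes fin: "finite C" and finy: "\<forall>y\<in>C. finite y"
    and cl: "\<forall>y\<in>C. insert v y \<in> C \<and> y - {v} \<in> C"
  shows "(\<Sum>y\<in>C. (-1::int) ^ card y) = 0"
proof -
  define A where "A = {y\<in>C. v \<notin> y}"
  define B where "B = {y\<in>C. v \<in> y}"
  have CAB: "C = A \<union> B" and dis: "A \<inter> B = {}" unfolding A_def B_def by auto
  have finA: "finite A" and finB: "finite B" using fin unfolding A_def B_def by auto
  have Bim: "B = insert v ` A"
  proof
    show "B \<subseteq> insert v ` A"
    proof
      fix y assume "y \<in> B"
      then have "y = insert v (y - {v})" "y - {v} \<in> A" using cl unfolding A_def B_def by auto
      then show "y \<in> insert v ` A" by blast
    qed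
    show "insert v ` A \<subseteq> B" using cl unfolding A_def B_def by auto
  qed
  have inj: "inj_on (insert v) A" unfolding A_def inj_on_def by (metis (mono_tags, lifting) Diff_insert_absorb mem_Collect_eq)
  have "(\<Sum>y\<in>B. (-1::int) ^ card y) = (\<Sum>y\<in>A. (-1::int) ^ card (insert v y))"
    unfolding Bim by (rule sum.reindex[OF inj, unfolded comp_def])
  also have "\<dots> = (\<Sum>y\<in>A. - ((-1::int) ^ card y))"
  proof (rule sum.cong)
    fix y assume "y \<in> A"
    then have "finite y" "v \<notin> y" using finy unfolding A_def by auto
    then show "(-1::int) ^ card (insert v y) = - ((-1::int) ^ card y)" by simp
  qed simp
  finally have "(\<Sum>y\<in>B. (-1::int) ^ card y) = - (\<Sum>y\<in>A. (-1::int) ^ card y)"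
    by (simp add: sum_negf)
  moreover have "(\<Sum>y\<in>C. (-1::int) ^ card y) = (\<Sum>y\<in>A. (-1::int) ^ card y) + (\<Sum>y\<in>B. (-1::int) ^ card y)"
    unfolding CAB using finA finB dis by (rule sum.union_disjoint)
  ultimately show ?thesis by simp
qed

lemma w_neg: "finite y \<Longrightarrow> y \<noteq> {} \<Longrightarrow> w y = - ((-1::int) ^ card y)"
  unfolding w_def
  by (metis card_gt_0_iff Suc_diff_1 mult_minus1 power_Suc minus_minus)

lemma sum_pow_nonempty:
  assumes "finite y" "y \<noteq> {}"
  shows "(\<Sum>x\<in>Pow y - {{}}. w x) = 1"
proof -
  obtain v where v: "v \<in> y" using assms by auto
  have z: "(\<Sum>x\<in>Pow y. (-1::int) ^ card x) = 0"
    by (rule toggle_sum) (use assms v finite_subset in auto)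
  have "(\<Sum>x\<in>Pow y - {{}}. w x) = (\<Sum>x\<in>Pow y - {{}}. - ((-1::int) ^ card x))"
    by (rule sum.cong) (auto intro: w_neg finite_subset[OF _ assms(1)])
  also have "\<dots> = - ((\<Sum>x\<in>Pow y. (-1::int) ^ card x) - 1)"
    using assms by (simp add: sum_negf sum_diff1)
  finally show ?thesis using z by simp
qed

lemma closed_star_char:
  assumes sc: "simplicial_complex G" and x: "x \<in> G"
  shows "euler_char (closed_star G x) = 1"
proof -
  have finG: "finite G" and el: "\<And>y. y \<in> G \<Longrightarrow> y \<noteq> {} \<and> finite y"
    and dc: "\<And>y z. z \<in> G \<Longrightarrow> y \<noteq> {} \<Longrightarrow> y \<subseteq> z \<Longrightarrow> y \<in> G"
    using sc unfolding simplicial_complex_def by blast+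
  define C where "C = {y. x \<union> y \<in> G}"
  have CS: "closed_star G x = C - {{}}"
  proof
    show "closed_star G x \<subseteq> C - {{}}"
    proof
      fix y assume "y \<in> closed_star G x"
      then obtain z where z: "z \<in> G" "x \<subseteq> z" "y \<subseteq> z" "y \<in> G"
        unfolding closed_star_def star_def by blast
      have "x \<union> y \<in> G" using dc[OF z(1)] z el[OF x] by blast
      then show "y \<in> C - {{}}" using el[OF z(4)] unfolding C_def by blast
    qed
    show "C - {{}} \<subseteq> closed_star G x"
    proof
      fix y assume "y \<in> C - {{}}"
      then have "x \<union> y \<in> G" "y \<noteq> {}" unfolding C_def by auto
      then have "y \<in> G" "x \<union> y \<in> star G x" using dc[of "x \<union> y" y] unfolding star_def by auto
      then show "y \<in> closed_star G x" unfolding closed_star_def by blast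
    qed
  qed
  have finC: "finite C"
  proof (rule finite_subset)
    show "C \<subseteq> Pow (\<Union>G)" unfolding C_def by auto
    show "finite (Pow (\<Union>G))" using finG el by auto
  qed
  have emp: "{} \<in> C" using x unfolding C_def by auto
  have finy: "\<forall>y\<in>C. finite y" unfolding C_def using el by blast
  obtain v where v: "v \<in> x" using el[OF x] by auto
  have z: "(\<Sum>y\<in>C. (-1::int) ^ card y) = 0"
  proof (rule toggle_sum[OF finC finy])
    show "\<forall>y\<in>C. insert v y \<in> C \<and> y - {v} \<in> C"
    proof
      fix y assume "y \<in> C"
      then have "x \<union> y \<in> G" unfolding C_def by auto
      moreover have "x \<union> insert v y = x \<union> y" "x \<union> (y - {v}) = x \<union> y" using v by auto
      ultimately show "insert v y \<in> C \<and> y - {v} \<in> C" unfolding C_def by simp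
    qed
  qed
  have "euler_char (closed_star G x) = (\<Sum>y\<in>C - {{}}. - ((-1::int) ^ card y))"
    unfolding CS euler_char_def by (rule sum.cong) (auto intro: w_neg simp: finy)
  also have "\<dots> = - ((\<Sum>y\<in>C. (-1::int) ^ card y) - 1)"
    using finC emp by (simp add: sum_negf sum_diff1)
  finally show ?thesis using z by simp
qed

lemma sphere_char:
  assumes sc: "simplicial_complex G" and x: "x \<in> G"
  shows "euler_char (unit_sphere G x) = 1 - euler_char (star G x)"
proof -
  have finG: "finite G" using sc unfolding simplicial_complex_def by blast
  have sub: "star G x \<subseteq> closed_star G x" unfolding star_def closed_star_def by auto
  have "finite (closed_star G x)" using finG unfolding closed_star_def by (rule finite_subset[rotated]) blast
  then have "euler_char (unit_sphere G x) = euler_char (closed_star G x) - euler_char (star G x)"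
    unfolding unit_sphere_def euler_char_def by (rule sum_diff[OF _ sub])
  then show ?thesis using closed_star_char[OF sc x] by linarith
qed

lemma main_identity:
  assumes sc: "simplicial_complex G"
  shows "(\<Sum>x\<in>G. w x * euler_char (star G x)) = euler_char G"
proof -
  have finG: "finite G" and el: "\<And>y. y \<in> G \<Longrightarrow> y \<noteq> {} \<and> finite y"
    and dc: "\<And>y z. z \<in> G \<Longrightarrow> y \<noteq> {} \<Longrightarrow> y \<subseteq> z \<Longrightarrow> y \<in> G"
    using sc unfolding simplicial_complex_def by blast+
  have "(\<Sum>x\<in>G. w x * euler_char (star G x)) = (\<Sum>x\<in>G. \<Sum>y\<in>{y\<in>G. x \<subseteq> y}. w x * w y)"
    unfolding euler_char_def star_def by (simp add: sum_distrib_left)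
  also have "\<dots> = (\<Sum>y\<in>G. \<Sum>x\<in>{x\<in>G. x \<subseteq> y}. w x * w y)"
    by (rule sum.swap_restrict[OF finG finG])
  also have "\<dots> = (\<Sum>y\<in>G. w y)"
  proof (rule sum.cong)
    fix y assume y: "y \<in> G"
    have "{x\<in>G. x \<subseteq> y} = Pow y - {{}}"
    proof
      show "{x\<in>G. x \<subseteq> y} \<subseteq> Pow y - {{}}" using el by blast
      show "Pow y - {{}} \<subseteq> {x\<in>G. x \<subseteq> y}" using dc[OF y] by blast
    qed
    then have "(\<Sum>x\<in>{x\<in>G. x \<subseteq> y}. w x * w y) = (\<Sum>x\<in>Pow y - {{}}. w x) * w y"
      by (simp add: sum_distrib_right)
    also have "\<dots> = w y" using sum_pow_nonempty[of y] el[OF y] by simp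
    finally show "(\<Sum>x\<in>{x\<in>G. x \<subseteq> y}. w x * w y) = w y" .
  qed simp
  finally show ?thesis unfolding euler_char_def .
qed

theorem mainTheorem6:
  fixes G :: "'a set set" and c :: int
  assumes "simplicial_complex G"
    and "\<forall>x\<in>G. euler_char (unit_sphere G x) = c"
  shows "euler_char G = 0 \<or> (\<forall>x\<in>G. euler_char (unit_sphere G x) = 0)"
proof -
  have "euler_char G = (\<Sum>x\<in>G. w x * euler_char (star G x))"
    using main_identity[OF assms(1)] by simp
  also have "\<dots> = (\<Sum>x\<in>G. w x * (1 - c))"
  proof (rule sum.cong)
    fix x assume x: "x \<in> G"
    show "w x * euler_char (star G x) = w x * (1 - c)"
      using sphere_char[OF assms(1) x] assms(2) x by simp
  qed simp
  also have "\<dots> = (1 - c) * euler_char G"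
    unfolding euler_char_def by (simp add: sum_distrib_left mult.commute)
  finally have "c * euler_char G = 0" by (simp add: algebra_simps)
  then show ?thesis using assms(2) by auto
qed

end
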